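(* Let $d\ge2$ and let $Q$ be a qplex whose set of extreme points forms a single orbit under the action $q\mapsto Rq$ of its preservation group $\mathcal{G}(Q)$. Then $\mathcal{G}(Q)$ is a strongly maximal stochastic subgroup of $\mathrm{O}(d^2)$.
   Context: Fix an integer $d\ge 2$. $\mathrm{O}(d^2)$ is the group of real orthogonal $d^2\times d^2$ matrices. $\langle\cdot,\cdot\rangle$ is the standard inner product on $\mathbb{R}^{d^2}$, $\|\cdot\|$ the Euclidean norm; $\overline{\mathrm{conv}}$ denotes closed convex hull. $\Delta=\{p\in\mathbb{R}^{d^2}: p(i)\ge0,\ \sum_ip(i)=1\}$; $H=\{u\in\mathbb{R}^{d^2}:\sum_i u(i)=1\}$; $c=(1/d^2,\dots,1/d^2)$. For $A\subseteq H$ the polar is $A^*=\{u\in H:\langle u,v\rangle\ge\frac{1}{d(d+1)}\ \forall v\in A\}$. Out-ball $B_{\rm o}=\{u\in H:\|u-c\|\le r_{\rm o}\}$, $r_{\rm o}^2=\frac{d-1}{d^2(d+1)}$. A qplex is a set $Q\subseteq\Delta\cap B_{\rm o}$ with $Q^*=Q$. A measurement is an array $r(i|j)\ge0$ with $\sum_i r(i|j)=1$ for every $j$; for $q\in Q$, $q_r(i)=\sum_j[(d+1)q(j)-\frac1d]r(i|j)$; it is $Q$-preserving if $\{q_r:q\in Q\}=Q$; its stretched measurement matrix is $R_{ij}=(d+1)r(i|j)-\frac1d\sum_k r(i|k)$. The preservation group $\mathcal{G}(Q)$ is the set of stretched measurement matrices of $Q$-preserving measurements. A subgroup $\mathcal{G}\subseteq\mathrm{O}(d^2)$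 is stochastic if every $R\in\mathcal{G}$ satisfies $R_{ij}\ge-\frac1d$ for all $i,j$ and $Rc=c$. For $R\in\mathcal{G}$ set $s^R_i(j)=\frac{dR_{ij}+1}{d(d+1)}$; the orbital germ of $\mathcal{G}$ is $\{s^R_i: R\in\mathcal{G},\ i=1,\dots,d^2\}$. A stochastic subgroup is maximal if it is not contained in any strictly larger stochastic subgroup, and strongly maximal if it is maximal and the closed convex hull of its orbital germ is a qplex. *)

theory Defs
  imports "HOL-Analysis.Analysis"
begin

text \<open>Vectors in R^(d^2) are modelled as real^'n with CARD('n) = d^2;
  d^2 x d^2 matrices as real^'n^'n.\<close>

definition simplexQ :: "(real^'n) set" where
  "simplexQ = {p. (\<forall>i. p$i \<ge> 0) \<and> (\<Sum>i\<in>UNIV. p$i) = 1}"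

definition hypH :: "(real^'n) set" where
  "hypH = {u. (\<Sum>i\<in>UNIV. u$i) = 1}"

definition centerC :: "real^'n" where
  "centerC = (\<chi> i. 1 / real CARD('n))"

definition polarQ :: "nat \<Rightarrow> (real^'n) set \<Rightarrow> (real^'n) set" where
  "polarQ d A = {u \<in> hypH. \<forall>v\<in>A. inner u v \<ge> 1 / (real d * (real d + 1))}"

definition r_out :: "nat \<Rightarrow> real" where
  "r_out d = sqrt ((real d - 1) / ((real d)^2 * (real d + 1)))"

definition outball :: "nat \<Rightarrow> (real^'n) set" where
  "outball d = {u \<in> hypH. norm (u - centerC) \<le> r_out d}"

definition qplex :: "nat \<Rightarrow> (real^'n) set \<Rightarrow> bool" where
  "qplex d Q \<longleftrightarrow> Q \<subseteq> simplexQ \<inter> outball d \<and> polarQ d Q = Q"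

text \<open>A measurement: r i j stands for r(i|j).\<close>
definition measurement :: "('n::finite \<Rightarrow> 'n \<Rightarrow> real) \<Rightarrow> bool" where
  "measurement r \<longleftrightarrow> (\<forall>i j. r i j \<ge> 0) \<and> (\<forall>j. (\<Sum>i\<in>UNIV. r i j) = 1)"

definition meas_apply :: "nat \<Rightarrow> ('n::finite \<Rightarrow> 'n \<Rightarrow> real) \<Rightarrow> real^'n \<Rightarrow> real^'n" where
  "meas_apply d r q = (\<chi> i. \<Sum>j\<in>UNIV. ((real d + 1) * q$j - 1 / real d) * r i j)"

definition Q_preserving :: "nat \<Rightarrow> (real^'n) set \<Rightarrow> ('n \<Rightarrow> 'n \<Rightarrow> real) \<Rightarrow> bool" where
  "Q_preserving d Q r \<longleftrightarrow> measurement r \<and> (meas_apply d r) ` Q = Q"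

definition stretched :: "nat \<Rightarrow> ('n::finite \<Rightarrow> 'n \<Rightarrow> real) \<Rightarrow> real^'n^'n" where
  "stretched d r = (\<chi> i j. (real d + 1) * r i j - (1 / real d) * (\<Sum>k\<in>UNIV. r i k))"

definition pres_group :: "nat \<Rightarrow> (real^'n) set \<Rightarrow> (real^'n^'n) set" where
  "pres_group d Q = {stretched d r | r. Q_preserving d Q r}"

definition orth_subgroup :: "(real^'n^'n) set \<Rightarrow> bool" where
  "orth_subgroup G \<longleftrightarrow> (\<forall>R\<in>G. orthogonal_matrix R) \<and> mat 1 \<in> G \<and>
     (\<forall>R\<in>G. \<forall>S\<in>G. R ** S \<in> G) \<and> (\<forall>R\<in>G. matrix_inv R \<in> G)"

definition stochastic :: "nat \<Rightarrow> (real^'n^'n) set \<Rightarrow> bool" where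
  "stochastic d G \<longleftrightarrow> orth_subgroup G \<and>
     (\<forall>R\<in>G. (\<forall>i j. R$i$j \<ge> - 1 / real d) \<and> R *v centerC = centerC)"

definition orbital_germ :: "nat \<Rightarrow> (real^'n^'n) set \<Rightarrow> (real^'n) set" where
  "orbital_germ d G = {(\<chi> j. (real d * R$i$j + 1) / (real d * (real d + 1))) | R i. R \<in> G}"

definition maximal_stochastic :: "nat \<Rightarrow> (real^'n^'n) set \<Rightarrow> bool" where
  "maximal_stochastic d G \<longleftrightarrow> stochastic d G \<and>
     (\<forall>G'. stochastic d G' \<and> G \<subseteq> G' \<longrightarrow> G' = G)"

definition strongly_maximal :: "nat \<Rightarrow> (real^'n^'n) set \<Rightarrow> bool" where
  "strongly_maximal d G \<longleftrightarrow> maximal_stochastic d G \<and>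
     qplex d (closure (convex hull (orbital_germ d G)))"

end

theory Submission
  imports Defs
begin

definition uvec :: "nat \<Rightarrow> 'n::finite \<Rightarrow> real^'n" where
  "uvec d k = (\<chi> i. ((if i = k then 1 else 0) + 1 / real d) / (real d + 1))"

definition Bsq :: "nat \<Rightarrow> real" where "Bsq d = 2 / (real d * (real d + 1))"

definition inG :: "nat \<Rightarrow> (real^'n) set \<Rightarrow> real^'n^'n \<Rightarrow> bool" where
  "inG d Q M \<longleftrightarrow> orthogonal_matrix M \<and> M *v centerC = centerC \<and> (\<lambda>x. M *v x) ` Q = Q"

lemma transpose_fix:
  assumes "orthogonal_matrix (M::real^'n^'n)" "M *v c = c" shows "transpose M *v c = c"
proof -
  have "transpose M *v c = transpose M *v (M *v c)" using assms(2) by simp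
  also have "\<dots> = c" using assms(1) by (simp add: matrix_vector_mul_assoc orthogonal_matrix_def)
  finally show ?thesis .
qed

context
  fixes d :: nat
  assumes d2: "d \<ge> 2" and card: "CARD('n::finite) = d^2"
begin

lemma dpos: "real d > 0" using d2 by simp

lemma nz: "real d \<noteq> 0" "real d + 1 \<noteq> 0" "1 + real d \<noteq> 0" using dpos by auto

lemma cardr: "real CARD('n) = real d ^ 2" using card by simp

lemma uvec_comp: "(uvec d k :: real^'n) $ i = (if i = k then 1/(real d + 1) else 0) + 1/(real d * (real d + 1))"
  by (simp add: uvec_def add_divide_distrib)

lemma sum_delta_real: "(\<Sum>i\<in>(UNIV::'n set). (if i = k then (a::real) else 0)) = a"
  by simp

lemma uvec_H: "(uvec d k :: real^'n) \<in> hypH"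
proof -
  have "(\<Sum>i\<in>UNIV. (uvec d k :: real^'n) $ i) = 1 / (real d + 1) + real CARD('n) * (1/(real d * (real d + 1)))"
    by (simp add: uvec_comp sum.distrib)
  also have "\<dots> = 1"
  proof -
    show ?thesis using dpos by (simp add: cardr divide_simps power2_eq_square)
  qed
  finally show ?thesis by (simp add: hypH_def)
qed

lemma inner_uvec: assumes "q \<in> (hypH :: (real^'n) set)"
  shows "inner (uvec d k) q = (q $ k + 1 / real d) / (real d + 1)"
proof -
  have s: "(\<Sum>i\<in>UNIV. q $ i) = 1" using assms by (simp add: hypH_def)
  have "inner (uvec d k) q = (\<Sum>i\<in>UNIV. (if i = k then q$i/(real d + 1) else 0) + 1/(real d * (real d + 1)) * q$i)"
    unfolding inner_vec_def by (intro sum.cong refl) (auto simp: uvec_comp algebra_simps)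
  also have "\<dots> = q$k / (real d + 1) + 1/(real d * (real d + 1)) * (\<Sum>i\<in>UNIV. q $ i)"
    by (simp add: sum.distrib sum_distrib_left)
  also have "\<dots> = (q $ k + 1 / real d) / (real d + 1)" using s dpos by (simp add: divide_simps)
  finally show ?thesis .
qed

lemma meas_eq: assumes "q \<in> (hypH :: (real^'n) set)"
  shows "meas_apply d r q = stretched d r *v q"
proof -
  have s: "(\<Sum>i\<in>UNIV. q $ i) = 1" using assms by (simp add: hypH_def)
  show ?thesis
  unfolding vec_eq_iff
  proof
    fix i
    have "(stretched d r *v q) $ i = (\<Sum>j\<in>UNIV. (real d + 1) * r i j * q$j) - (1/real d) * (\<Sum>k\<in>UNIV. r i k) * (\<Sum>j\<in>UNIV. q $ j)"
      by (simp add: stretched_def matrix_vector_mult_def left_diff_distrib sum_subtractf sum_distrib_left)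
    also have "\<dots> = (\<Sum>j\<in>UNIV. (real d + 1) * r i j * q$j) - (1/real d) * (\<Sum>k\<in>UNIV. r i k)" using s by simp
    also have "\<dots> = (\<Sum>j\<in>UNIV. ((real d + 1) * q$j) * r i j - (1 / real d) * r i j)"
      by (simp add: sum_subtractf sum_distrib_left mult_ac sum_divide_distrib)
    also have "\<dots> = meas_apply d r q $ i"
      by (simp add: meas_apply_def left_diff_distrib)
    finally show "meas_apply d r q $ i = (stretched d r *v q) $ i" by simp
  qed
qed



lemma sq_norm_vec: "(norm (x::real^'n))^2 = (\<Sum>i\<in>UNIV. (x$i)^2)"
  unfolding power2_norm_eq_inner inner_vec_def by (simp add: power2_eq_square)

lemma outball_sq: assumes "q \<in> (outball d :: (real^'n) set)"
  shows "(\<Sum>i\<in>UNIV. (q$i)^2) \<le> Bsq d"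
proof -
  have H: "(\<Sum>i\<in>UNIV. q $ i) = 1" and n: "norm (q - centerC) \<le> r_out d"
    using assms by (auto simp: outball_def hypH_def)
  have a0: "(real d - 1) / ((real d)^2 * (real d + 1)) \<ge> 0" using d2 by simp
  have "(norm (q - centerC))^2 \<le> (r_out d)^2"
    using n by (intro power_mono) auto
  also have "\<dots> = (real d - 1) / ((real d)^2 * (real d + 1))"
    unfolding r_out_def using a0 by simp
  finally have le: "(norm (q - centerC))^2 \<le> (real d - 1) / ((real d)^2 * (real d + 1))" .
  have "(norm (q - centerC))^2 = (\<Sum>i\<in>UNIV. (q$i)^2 - 2 / real CARD('n) * q$i + 1 / (real CARD('n))^2)"
    unfolding sq_norm_vec by (intro sum.cong refl) (simp add: centerC_def power2_eq_square algebra_simps)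
  also have "\<dots> = (\<Sum>i\<in>UNIV. (q$i)^2) - 2 / real CARD('n) * (\<Sum>i\<in>UNIV. q$i) + real CARD('n) / (real CARD('n))^2"
    by (simp add: sum.distrib sum_subtractf sum_distrib_left)
  also have "\<dots> = (\<Sum>i\<in>UNIV. (q$i)^2) - 1 / (real d)^2"
    using H dpos by (simp add: cardr divide_simps power2_eq_square)
  finally have "(\<Sum>i\<in>UNIV. (q$i)^2) \<le> (real d - 1) / ((real d)^2 * (real d + 1)) + 1 / (real d)^2"
    using le by linarith
  also have "\<dots> = Bsq d" unfolding Bsq_def using dpos
    by (simp add: divide_simps power2_eq_square)
  finally show ?thesis .
qed

lemma Q_facts: assumes "qplex d (Q :: (real^'n) set)" "q \<in> Q"
  shows "q \<in> hypH" "\<And>i. q $ i \<ge> 0" "(\<Sum>i\<in>UNIV. (q$i)^2) \<le> Bsq d"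
  using assms outball_sq by (auto simp: qplex_def simplexQ_def hypH_def outball_def)

lemma uvec_in_Q: assumes "qplex d (Q :: (real^'n) set)" shows "uvec d k \<in> Q"
proof -
  have "uvec d k \<in> polarQ d Q"
    unfolding polarQ_def
  proof (intro CollectI conjI ballI uvec_H)
    fix v assume v: "v \<in> Q"
    have "inner (uvec d k) v = (v $ k + 1 / real d) / (real d + 1)"
      using Q_facts(1)[OF assms v] by (rule inner_uvec)
    also have "\<dots> \<ge> (0 + 1 / real d) / (real d + 1)"
      using Q_facts(2)[OF assms v, of k] dpos by (intro divide_right_mono) auto
    finally show "inner (uvec d k) v \<ge> 1 / (real d * (real d + 1))" by simp
  qed
  thus ?thesis using assms by (simp add: qplex_def)
qed

lemma uvec_sq: "(\<Sum>i\<in>UNIV. ((uvec d k :: real^'n) $ i)^2) = Bsq d"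
proof -
  let ?a = "1/(real d + 1)" and ?b = "1/(real d * (real d + 1))"
  have "(\<Sum>i\<in>UNIV. ((uvec d k :: real^'n) $ i)^2) = (\<Sum>i\<in>(UNIV::'n set). (if i = k then ?a^2 + 2*?a*?b else 0) + ?b^2)"
    by (intro sum.cong refl) (auto simp: uvec_comp power2_eq_square algebra_simps)
  also have "\<dots> = ?a^2 + 2*?a*?b + real CARD('n) * ?b^2"
    by (simp add: sum.distrib)
  also have "\<dots> = Bsq d" unfolding Bsq_def cardr using dpos
    by (simp add: divide_simps power2_eq_square)
  finally show ?thesis .
qed

lemma strict_conv_norm:
  fixes a b :: "'a::real_inner"
  shows "(norm ((1 - t) *\<^sub>R a + t *\<^sub>R b))^2 = (1-t) * (norm a)^2 + t * (norm b)^2 - t*(1-t)*(norm (a - b))^2"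
  by (simp add: power2_norm_eq_inner inner_add_left inner_add_right inner_diff_left inner_diff_right
      inner_commute algebra_simps)

lemma uvec_extreme: assumes "qplex d (Q :: (real^'n) set)" shows "uvec d k extreme_point_of Q"
  unfolding extreme_point_of_def
proof (intro conjI ballI uvec_in_Q[OF assms])
  fix a b assume a: "a \<in> Q" and b: "b \<in> Q"
  show "uvec d k \<notin> open_segment a b"
  proof
    assume "uvec d k \<in> open_segment a b"
    then obtain t where ab: "a \<noteq> b" and t: "0 < t" "t < 1" and u: "uvec d k = (1 - t) *\<^sub>R a + t *\<^sub>R b"
      by (auto simp: in_segment)
    have na: "(norm a)^2 \<le> Bsq d" using Q_facts(3)[OF assms a] by (simp add: sq_norm_vec)
    have nb: "(norm b)^2 \<le> Bsq d" using Q_facts(3)[OF assms b] by (simp add: sq_norm_vec)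
    have pos: "t*(1-t)*(norm (a - b))^2 > 0" using t ab by simp
    have "(norm (uvec d k :: real^'n))^2 = Bsq d" by (simp add: sq_norm_vec uvec_sq)
    also have "(norm (uvec d k :: real^'n))^2 = (1-t) * (norm a)^2 + t * (norm b)^2 - t*(1-t)*(norm (a - b))^2"
      unfolding u by (rule strict_conv_norm)
    finally have "Bsq d = (1-t) * (norm a)^2 + t * (norm b)^2 - t*(1-t)*(norm (a - b))^2" by simp
    moreover have "(1-t) * (norm a)^2 \<le> (1-t) * Bsq d" using na t by (intro mult_left_mono) auto
    moreover have "t * (norm b)^2 \<le> t * Bsq d" using nb t by (intro mult_left_mono) auto
    ultimately show False using pos by (simp add: algebra_simps)
  qed
qed

lemma sum_sq_expand:
  fixes x :: "'n \<Rightarrow> real"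
  shows "(\<Sum>k\<in>UNIV. (a * x k - c)^2) = a^2 * (\<Sum>k\<in>UNIV. (x k)^2) - 2 * a * c * (\<Sum>k\<in>UNIV. x k) + real CARD('n) * c^2"
proof -
  have "(\<Sum>k\<in>UNIV. (a * x k - c)^2) = (\<Sum>k\<in>UNIV. a^2 * (x k)^2 - (2*a*c) * x k + c^2)"
    by (intro sum.cong refl) (simp add: power2_eq_square algebra_simps)
  also have "\<dots> = a^2 * (\<Sum>k\<in>UNIV. (x k)^2) - 2 * a * c * (\<Sum>k\<in>UNIV. x k) + real CARD('n) * c^2"
    by (simp add: sum.distrib sum_subtractf sum_distrib_left)
  finally show ?thesis .
qed

lemma frob:
  fixes v :: "'n \<Rightarrow> real^'n"
  assumes s1: "\<And>k. (\<Sum>i\<in>UNIV. v k $ i) = 1" and sq: "\<And>k. (\<Sum>i\<in>UNIV. (v k $ i)^2) \<le> Bsq d"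
  shows "(\<Sum>i\<in>UNIV. \<Sum>k\<in>UNIV. ((real d+1) * v k $ i - (1/real d) * (\<Sum>l\<in>UNIV. v l $ i))^2) \<le> (real d)^2"
proof -
  define D where "D = real d"
  have D: "D > 0" using dpos D_def by simp
  define A where "A i = (\<Sum>l\<in>UNIV. v l $ i)" for i
  define S2 where "S2 = (\<Sum>i\<in>UNIV. \<Sum>k\<in>UNIV. (v k $ i)^2)"
  define TA where "TA = (\<Sum>i\<in>(UNIV::'n set). (A i)^2)"
  have e: "(\<Sum>i\<in>UNIV. \<Sum>k\<in>UNIV. ((real d+1) * v k $ i - (1/real d) * (\<Sum>l\<in>UNIV. v l $ i))^2)
      = (\<Sum>i\<in>UNIV. (D+1)^2 * (\<Sum>k\<in>UNIV. (v k $ i)^2) - 2 * (D+1) * (A i / D) * A i + D^2 * (A i / D)^2)"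
    unfolding D_def A_def
    by (intro sum.cong refl) (simp add: sum_sq_expand[where x = "\<lambda>k. v k $ _"] cardr)
  also have "\<dots> = (\<Sum>i\<in>UNIV. (D+1)^2 * (\<Sum>k\<in>UNIV. (v k $ i)^2) - (2 * (D+1) / D - 1) * (A i)^2)"
    using D by (intro sum.cong refl) (simp add: divide_simps power2_eq_square algebra_simps)
  also have "\<dots> = (D+1)^2 * S2 - (2 * (D+1) / D - 1) * TA"
    unfolding S2_def TA_def by (simp add: sum_subtractf sum_distrib_left)
  finally have e: "(\<Sum>i\<in>UNIV. \<Sum>k\<in>UNIV. ((real d+1) * v k $ i - (1/real d) * (\<Sum>l\<in>UNIV. v l $ i))^2)
      = (D+1)^2 * S2 - (2 * (D+1) / D - 1) * TA" .
  have "S2 = (\<Sum>k\<in>UNIV. \<Sum>i\<in>UNIV. (v k $ i)^2)" unfolding S2_def by (rule sum.swap)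
  also have "\<dots> \<le> (\<Sum>k\<in>(UNIV::'n set). Bsq d)" by (intro sum_mono sq)
  finally have S2le: "S2 \<le> D^2 * (2 / (D * (D+1)))" by (simp add: cardr Bsq_def D_def)
  have SA: "(\<Sum>i\<in>UNIV. A i) = D^2"
    unfolding A_def by (subst sum.swap) (simp add: s1 cardr D_def)
  have "0 \<le> (\<Sum>i\<in>(UNIV::'n set). (A i - 1)^2)" by (intro sum_nonneg) simp
  also have "\<dots> = TA - 2 * (\<Sum>i\<in>UNIV. A i) + D^2"
    unfolding TA_def by (simp add: power2_diff sum_subtractf sum.distrib sum_distrib_left cardr D_def)
  finally have TAge: "TA \<ge> D^2" using SA by simp
  have c1: "(D+1)^2 * S2 \<le> (D+1)^2 * (D^2 * (2 / (D * (D+1))))"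
    by (intro mult_left_mono S2le) simp
  have c2: "(D+1)^2 * (D^2 * (2 / (D * (D+1)))) = 2 * D * (D + 1)" using D
    by (simp add: divide_simps power2_eq_square)
  have c3: "2 * (D+1) / D - 1 = (D + 2) / D" using D by (simp add: divide_simps)
  have c4: "(D + 2) / D * TA \<ge> (D + 2) / D * D^2"
    using TAge D by (intro mult_left_mono) auto
  have c5: "(D + 2) / D * D^2 = D * (D + 2)" using D by (simp add: power2_eq_square)
  have c6: "(2*(D+1)/D - 1) * TA \<ge> D*(D+2)" using c3 c4 c5 by simp
  have c7: "2 * D * (D + 1) - D*(D+2) = D^2" by (simp add: power2_eq_square algebra_simps)
  have "(D+1)^2 * S2 - (2*(D+1)/D - 1)*TA \<le> D^2" using c1 c2 c6 c7 by linarith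
  thus ?thesis using e by (simp add: D_def)
qed

lemma uvec_scaled: "(real d + 1) * (uvec d k :: real^'n) $ j - 1 / real d = (if j = k then 1 else 0)"
  using dpos by (simp add: uvec_comp divide_simps)

lemma uvec_sum_idx: "(\<Sum>l\<in>(UNIV::'n set). (uvec d l :: real^'n) $ i) = 1"
proof -
  have "(\<Sum>l\<in>(UNIV::'n set). (uvec d l :: real^'n) $ i) = (\<Sum>l\<in>(UNIV::'n set). (if l = i then 1/(real d + 1) else 0) + 1/(real d * (real d + 1)))"
    by (intro sum.cong refl) (auto simp: uvec_comp)
  also have "\<dots> = 1 / (real d + 1) + real CARD('n) * (1/(real d * (real d + 1)))"
    by (simp add: sum.distrib)
  also have "\<dots> = 1" using dpos by (simp add: cardr divide_simps power2_eq_square)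
  finally show ?thesis .
qed

lemma meas_uvec: "meas_apply d r (uvec d k :: real^'n) = (\<chi> i. r i k)"
proof -
  have "meas_apply d r (uvec d k :: real^'n) $ i = r i k" for i
  proof -
    have "meas_apply d r (uvec d k :: real^'n) $ i = (\<Sum>j\<in>UNIV. (if j = k then 1 else 0) * r i j)"
      unfolding meas_apply_def by (simp only: vec_lambda_beta uvec_scaled)
    also have "\<dots> = (\<Sum>j\<in>UNIV. (if j = k then r i j else 0))"
      by (intro sum.cong) auto
    also have "\<dots> = r i k" by simp
    finally show ?thesis .
  qed
  thus ?thesis by (simp add: vec_eq_iff)
qed

lemma pres_sub:
  assumes Qp: "qplex d (Q::(real^'n) set)" and rp: "Q_preserving d Q r"
  shows "orthogonal_matrix (stretched d r) \<and> stretched d r *v centerC = centerC \<and> (\<lambda>x. stretched d r *v x) ` Q = Q"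
proof -
  define R where "R = stretched d r"
  have meas: "measurement r" and img: "meas_apply d r ` Q = Q" using rp by (auto simp: Q_preserving_def)
  have QH: "\<And>q. q \<in> Q \<Longrightarrow> q \<in> hypH" using Q_facts(1)[OF Qp] .
  have img2: "(\<lambda>x. R *v x) ` Q = Q"
    using img meas_eq QH unfolding R_def by (metis (no_types, lifting) image_cong)
  define v where "v k = (\<chi> i. r i k)" for k
  have vQ: "v k \<in> Q" for k
  proof -
    have "v k = meas_apply d r (uvec d k)" unfolding v_def by (simp add: meas_uvec)
    thus ?thesis using img uvec_in_Q[OF Qp] by blast
  qed
  have "\<forall>k. \<exists>x\<in>Q. uvec d k = meas_apply d r x" using img uvec_in_Q[OF Qp] by blast
  then obtain q where qQ: "\<And>k. q k \<in> Q" and qm: "\<And>k. uvec d k = meas_apply d r (q k)"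
    by metis
  have Rq: "R *v q k = uvec d k" for k using qm[of k] meas_eq[OF QH[OF qQ[of k]]] by (simp add: R_def)
  have Rform: "R $ i $ k = (real d+1) * v k $ i - (1/real d) * (\<Sum>l\<in>UNIV. v l $ i)" for i k
    by (simp add: R_def stretched_def v_def)
  define S where "S = (\<chi> i k. (real d+1) * q k $ i - (1/real d) * (\<Sum>l\<in>UNIV. q l $ i))"
  have Sform: "S $ i $ k = (real d+1) * q k $ i - (1/real d) * (\<Sum>l\<in>UNIV. q l $ i)" for i k
    by (simp add: S_def)
  have FR: "(\<Sum>i\<in>UNIV. \<Sum>k\<in>UNIV. (R $ i $ k)^2) \<le> (real d)^2"
    unfolding Rform using Q_facts[OF Qp vQ] hypH_def by (intro frob) auto
  have FS: "(\<Sum>i\<in>UNIV. \<Sum>k\<in>UNIV. (S $ i $ k)^2) \<le> (real d)^2"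
    unfolding Sform using Q_facts[OF Qp qQ] hypH_def by (intro frob) auto
  have RS: "(R ** S) $ i $ j = (if i = j then 1 else 0)" for i j
  proof -
    have "(R ** S) $ i $ j = (\<Sum>k\<in>UNIV. (real d + 1) * (R $ i $ k * q j $ k) - (1/real d) * (\<Sum>l\<in>UNIV. R $ i $ k * q l $ k))"
      unfolding matrix_matrix_mult_def vec_lambda_beta Sform
      by (intro sum.cong refl) (simp add: right_diff_distrib sum_distrib_left[symmetric])
    also have "\<dots> = (real d + 1) * (\<Sum>k\<in>UNIV. R $ i $ k * q j $ k) - (1/real d) * (\<Sum>l\<in>UNIV. \<Sum>k\<in>UNIV. R $ i $ k * q l $ k)"
    proof -
      have sw: "(\<Sum>k\<in>UNIV. \<Sum>l\<in>UNIV. R $ i $ k * q l $ k) = (\<Sum>l\<in>UNIV. \<Sum>k\<in>UNIV. R $ i $ k * q l $ k)"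
        by (rule sum.swap)
      have sw2: "(\<Sum>k\<in>UNIV. R $ i $ k * (\<Sum>l\<in>UNIV. q l $ k)) = (\<Sum>l\<in>UNIV. \<Sum>k\<in>UNIV. R $ i $ k * q l $ k)"
        unfolding sw[symmetric] by (simp only: sum_distrib_left)
      show ?thesis by (simp only: sum_subtractf sum_distrib_left[symmetric] sw2)
    qed
    also have "\<dots> = (real d + 1) * (R *v q j) $ i - (1/real d) * (\<Sum>l\<in>UNIV. (R *v q l) $ i)"
      by (simp add: matrix_vector_mult_def)
    also have "\<dots> = (real d + 1) * uvec d j $ i - (1/real d) * 1"
      by (simp add: Rq uvec_sum_idx)
    also have "\<dots> = (if i = j then 1 else 0)" using uvec_scaled by simp
    finally show ?thesis .
  qed
  have tr: "(\<Sum>i\<in>UNIV. \<Sum>k\<in>UNIV. R $ i $ k * S $ k $ i) = (real d)^2"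
  proof -
    have "(\<Sum>i\<in>UNIV. \<Sum>k\<in>UNIV. R $ i $ k * S $ k $ i) = (\<Sum>i\<in>(UNIV::'n set). 1)"
      using RS by (intro sum.cong refl) (simp add: matrix_matrix_mult_def)
    thus ?thesis by (simp add: cardr)
  qed
  have "(\<Sum>i\<in>UNIV. \<Sum>k\<in>UNIV. (R $ i $ k - S $ k $ i)^2)
      = (\<Sum>i\<in>UNIV. \<Sum>k\<in>UNIV. (R $ i $ k)^2) - 2 * (\<Sum>i\<in>UNIV. \<Sum>k\<in>UNIV. R $ i $ k * S $ k $ i)
        + (\<Sum>i\<in>UNIV. \<Sum>k\<in>UNIV. (S $ k $ i)^2)"
  proof -
    have "(\<Sum>i\<in>UNIV. \<Sum>k\<in>UNIV. (R $ i $ k - S $ k $ i)^2) = (\<Sum>i\<in>UNIV. \<Sum>k\<in>UNIV. (R $ i $ k)^2 + (S $ k $ i)^2 - 2 * (R $ i $ k * S $ k $ i))"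
      by (simp only: power2_diff mult.assoc)
    also have "\<dots> = (\<Sum>i\<in>UNIV. \<Sum>k\<in>UNIV. (R $ i $ k)^2) + (\<Sum>i\<in>UNIV. \<Sum>k\<in>UNIV. (S $ k $ i)^2) - 2 * (\<Sum>i\<in>UNIV. \<Sum>k\<in>UNIV. R $ i $ k * S $ k $ i)"
      by (simp only: sum.distrib sum_subtractf sum_distrib_left[symmetric])
    also have "\<dots> = (\<Sum>i\<in>UNIV. \<Sum>k\<in>UNIV. (R $ i $ k)^2) - 2 * (\<Sum>i\<in>UNIV. \<Sum>k\<in>UNIV. R $ i $ k * S $ k $ i)
        + (\<Sum>i\<in>UNIV. \<Sum>k\<in>UNIV. (S $ k $ i)^2)" by simp
    finally show ?thesis .
  qed
  also have "(\<Sum>i\<in>UNIV. \<Sum>k\<in>UNIV. (S $ k $ i)^2) = (\<Sum>k\<in>UNIV. \<Sum>i\<in>UNIV. (S $ k $ i)^2)"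
    by (rule sum.swap)
  finally have "(\<Sum>i\<in>UNIV. \<Sum>k\<in>UNIV. (R $ i $ k - S $ k $ i)^2) \<le> 0"
    using FR FS tr by linarith
  hence z: "(\<Sum>i\<in>UNIV. \<Sum>k\<in>UNIV. (R $ i $ k - S $ k $ i)^2) = 0"
    by (meson order_antisym sum_nonneg zero_le_power2)
  have "\<forall>i\<in>UNIV. (\<Sum>k\<in>UNIV. (R $ i $ k - S $ k $ i)^2) = 0"
    using z by (subst sum_nonneg_eq_0_iff[symmetric]) (auto intro: sum_nonneg)
  hence "\<forall>i k. (R $ i $ k - S $ k $ i)^2 = 0"
    by (simp add: sum_nonneg_eq_0_iff)
  hence RST: "\<forall>i k. R $ i $ k = S $ k $ i" by simp
  hence ST: "S = transpose R" by (simp add: vec_eq_iff transpose_def)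
  have "R ** transpose R = mat 1"
    using RS ST by (simp add: vec_eq_iff mat_def)
  hence orth: "orthogonal_matrix R"
    using matrix_left_right_inverse orthogonal_matrix_def by blast
  have rows: "(\<Sum>k\<in>UNIV. R $ i $ k) = 1" for i
  proof -
    have "(\<Sum>k\<in>UNIV. R $ i $ k) = (\<Sum>k\<in>UNIV. (real d+1) * q i $ k - (1/real d) * (\<Sum>l\<in>UNIV. q l $ k))"
      using RST by (simp add: Sform)
    also have "\<dots> = (real d+1) * (\<Sum>k\<in>UNIV. q i $ k) - (1/real d) * (\<Sum>l\<in>UNIV. \<Sum>k\<in>UNIV. q l $ k)"
      by (simp only: sum_subtractf sum_distrib_left[symmetric] sum.swap[of "\<lambda>k l. q l $ k"])
    also have "\<dots> = (real d+1) - (1/real d) * real CARD('n)"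
      using QH[OF qQ] by (simp add: hypH_def)
    also have "\<dots> = 1" using dpos by (simp add: cardr power2_eq_square)
    finally show ?thesis .
  qed
  have Rc: "R *v centerC = centerC"
    by (simp add: vec_eq_iff matrix_vector_mult_def centerC_def sum_divide_distrib[symmetric] rows)
  show ?thesis using orth Rc img2 unfolding R_def by blast
qed

lemma rowsum_of_fix: assumes "(M::real^'n^'n) *v centerC = centerC" shows "(\<Sum>k\<in>UNIV. M $ i $ k) = 1"
proof -
  have "(M *v centerC) $ i = (\<Sum>k\<in>UNIV. M $ i $ k) / real CARD('n)"
    by (simp add: matrix_vector_mult_def centerC_def sum_divide_distrib)
  hence "(\<Sum>k\<in>UNIV. M $ i $ k) / real CARD('n) = 1 / real CARD('n)" using assms by (simp add: centerC_def)
  thus ?thesis by (simp add: divide_simps)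
qed

lemma colsum_of_fix: assumes "orthogonal_matrix (M::real^'n^'n)" "M *v centerC = centerC"
  shows "(\<Sum>i\<in>UNIV. M $ i $ j) = 1"
  using rowsum_of_fix[OF transpose_fix[OF assms], of j] by (simp add: transpose_def)

lemma Mu: assumes "\<And>i. (\<Sum>k\<in>UNIV. (M::real^'n^'n) $ i $ k) = 1"
  shows "(M *v uvec d j) $ i = (M $ i $ j + 1 / real d) / (real d + 1)"
proof -
  have "(M *v uvec d j) $ i = (\<Sum>k\<in>UNIV. (if k = j then M $ i $ k / (real d + 1) else 0) + M $ i $ k * (1/(real d * (real d + 1))))"
    unfolding matrix_vector_mult_def vec_lambda_beta by (intro sum.cong refl) (auto simp: uvec_comp algebra_simps)
  also have "\<dots> = M $ i $ j / (real d + 1) + (\<Sum>k\<in>UNIV. M $ i $ k) * (1/(real d * (real d + 1)))"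
    by (simp add: sum.distrib sum_distrib_right sum_divide_distrib)
  also have "\<dots> = (M $ i $ j + 1 / real d) / (real d + 1)" using assms dpos by (simp add: divide_simps)
  finally show ?thesis .
qed

lemma MTu: assumes "orthogonal_matrix (M::real^'n^'n)" "M *v centerC = centerC"
  shows "(transpose M *v uvec d i) $ j = (M $ i $ j + 1 / real d) / (real d + 1)"
proof -
  have "\<And>a. (\<Sum>k\<in>UNIV. transpose M $ a $ k) = 1" using colsum_of_fix[OF assms] by (simp add: transpose_def)
  from Mu[OF this] show ?thesis by (simp add: transpose_def)
qed

lemma inG_entries: assumes Qp: "qplex d (Q::(real^'n) set)" and G: "inG d Q M"
  shows "(M $ i $ j + 1 / real d) / (real d + 1) \<ge> 0" "M $ i $ j \<ge> - 1 / real d"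
proof -
  have o: "orthogonal_matrix M" and c: "M *v centerC = centerC" and im: "(\<lambda>x. M *v x) ` Q = Q"
    using G by (auto simp: inG_def)
  obtain x where x: "x \<in> Q" "uvec d i = M *v x" using uvec_in_Q[OF Qp, of i] im by blast
  have T: "transpose M *v uvec d i = x" using x(2) o by (simp add: matrix_vector_mul_assoc orthogonal_matrix_def)
  have "(M $ i $ j + 1 / real d) / (real d + 1) = x $ j" using MTu[OF o c, of i j] T by metis
  thus ge: "(M $ i $ j + 1 / real d) / (real d + 1) \<ge> 0" using Q_facts(2)[OF Qp x(1)] by simp
  thus "M $ i $ j \<ge> - 1 / real d" using dpos by (simp add: divide_simps)
qed

lemma pres_sup: assumes Qp: "qplex d (Q::(real^'n) set)" and G: "inG d Q M"
  shows "M \<in> pres_group d Q"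
proof -
  have o: "orthogonal_matrix M" and c: "M *v centerC = centerC" and im: "(\<lambda>x. M *v x) ` Q = Q"
    using G by (auto simp: inG_def)
  define r where "r i j = (M $ i $ j + 1 / real d) / (real d + 1)" for i j
  have rows: "(\<Sum>k\<in>UNIV. M $ i $ k) = 1" for i using rowsum_of_fix[OF c] .
  have cols: "(\<Sum>i\<in>UNIV. M $ i $ j) = 1" for j using colsum_of_fix[OF o c] .
  have sr: "(\<Sum>k\<in>UNIV. r i k) = 1" for i
  proof -
    have "(\<Sum>k\<in>UNIV. r i k) = ((\<Sum>k\<in>UNIV. M $ i $ k) + real CARD('n) / real d) / (real d + 1)"
      unfolding r_def by (simp add: sum_divide_distrib[symmetric] sum.distrib)
    also have "\<dots> = (1 + real d) / (real d + 1)" using rows dpos by (simp add: cardr power2_eq_square)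
    also have "\<dots> = 1" using dpos by simp
    finally show ?thesis .
  qed
  have sc: "(\<Sum>i\<in>UNIV. r i j) = 1" for j
  proof -
    have "(\<Sum>i\<in>UNIV. r i j) = ((\<Sum>i\<in>UNIV. M $ i $ j) + real CARD('n) / real d) / (real d + 1)"
      unfolding r_def by (simp add: sum_divide_distrib[symmetric] sum.distrib)
    also have "\<dots> = (1 + real d) / (real d + 1)" using cols dpos by (simp add: cardr power2_eq_square)
    also have "\<dots> = 1" using dpos by simp
    finally show ?thesis .
  qed
  have meas: "measurement r" unfolding measurement_def using inG_entries(1)[OF Qp G] sc by (simp add: r_def)
  have st: "stretched d r = M"
  proof -
    have "stretched d r $ i $ j = M $ i $ j" for i j
    proof -
      have "stretched d r $ i $ j = (real d + 1) * r i j - 1 / real d" by (simp add: stretched_def sr)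
      also have "\<dots> = M $ i $ j" unfolding r_def using dpos by (simp add: divide_simps)
      finally show ?thesis .
    qed
    thus ?thesis by (simp add: vec_eq_iff)
  qed
  have "meas_apply d r ` Q = (\<lambda>x. M *v x) ` Q"
    using meas_eq Q_facts(1)[OF Qp] st by (metis (no_types, lifting) image_cong)
  hence "Q_preserving d Q r" using meas im by (simp add: Q_preserving_def)
  thus ?thesis using st unfolding pres_group_def by blast
qed

lemma pres_char: assumes Qp: "qplex d (Q::(real^'n) set)"
  shows "pres_group d Q = {M. inG d Q M}"
proof
  show "pres_group d Q \<subseteq> {M. inG d Q M}"
    using pres_sub[OF Qp] unfolding pres_group_def inG_def by blast
  show "{M. inG d Q M} \<subseteq> pres_group d Q" using pres_sup[OF Qp] by blast
qed

lemma matrix_inv_orth: assumes "orthogonal_matrix (M::real^'n^'n)" shows "matrix_inv M = transpose M"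
proof -
  have ex: "M ** transpose M = mat 1 \<and> transpose M ** M = mat 1" using assms by (simp add: orthogonal_matrix_def)
  have "M ** matrix_inv M = mat 1 \<and> matrix_inv M ** M = mat 1"
    unfolding matrix_inv_def by (rule someI[of _ "transpose M"]) (rule ex)
  hence "M ** matrix_inv M = mat 1" by blast
  hence "transpose M ** (M ** matrix_inv M) = transpose M" by simp
  thus ?thesis using ex by (simp add: matrix_mul_assoc)
qed

lemma inG_mul: assumes "inG d Q M" "inG d Q N" shows "inG d Q (M ** N)"
proof -
  have "(\<lambda>x. (M ** N) *v x) ` Q = (\<lambda>x. M *v x) ` ((\<lambda>x. N *v x) ` Q)"
    by (simp add: image_image matrix_vector_mul_assoc)
  thus ?thesis using assms unfolding inG_def
    by (simp add: orthogonal_matrix_mul matrix_vector_mul_assoc[symmetric])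
qed

lemma inG_transpose: assumes "inG d Q M" shows "inG d Q (transpose M)"
proof -
  have o: "orthogonal_matrix M" and c: "M *v centerC = centerC" and im: "(\<lambda>x. M *v x) ` Q = Q"
    using assms by (auto simp: inG_def)
  have tM: "transpose M *v (M *v x) = x" for x using o by (simp only: matrix_vector_mul_assoc orthogonal_matrix_def) simp
  have "(\<lambda>x. transpose M *v x) ` Q = (\<lambda>x. transpose M *v x) ` ((\<lambda>x. M *v x) ` Q)" using im by simp
  also have "\<dots> = Q" by (simp only: image_image tM) simp
  finally show ?thesis using o transpose_fix[OF o c] by (simp add: inG_def)
qed

lemma inG_id: "inG d Q (mat 1)" by (simp add: inG_def orthogonal_matrix_id)

lemma hyp_pres: assumes "orthogonal_matrix (M::real^'n^'n)" "M *v centerC = centerC" "x \<in> hypH"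
  shows "M *v x \<in> hypH"
proof -
  have "(\<Sum>i\<in>UNIV. (M *v x) $ i) = (\<Sum>i\<in>UNIV. \<Sum>k\<in>UNIV. M $ i $ k * x $ k)"
    by (simp add: matrix_vector_mult_def)
  also have "\<dots> = (\<Sum>k\<in>UNIV. \<Sum>i\<in>UNIV. M $ i $ k * x $ k)" by (rule sum.swap)
  also have "\<dots> = (\<Sum>k\<in>UNIV. (\<Sum>i\<in>UNIV. M $ i $ k) * x $ k)" by (simp add: sum_distrib_right)
  also have "\<dots> = 1" using colsum_of_fix[OF assms(1,2)] assms(3) by (simp add: hypH_def)
  finally show ?thesis by (simp add: hypH_def)
qed

lemma germ_eq: assumes "orthogonal_matrix (M::real^'n^'n)" "M *v centerC = centerC"
  shows "(\<chi> j. (real d * M$i$j + 1) / (real d * (real d + 1))) = transpose M *v uvec d i"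
proof -
  have "(real d * M$i$j + 1) / (real d * (real d + 1)) = (transpose M *v uvec d i) $ j" for j
    using MTu[OF assms, of i j] dpos by (simp add: divide_simps)
  thus ?thesis by (simp add: vec_eq_iff)
qed

lemma polar_closed_convex: "closed (polarQ d (A::(real^'n) set)) \<and> convex (polarQ d A)"
proof -
  have eq: "polarQ d A = {u. inner (\<chi> i. 1) u = 1} \<inter> (\<Inter>v\<in>A. {u. inner v u \<ge> 1 / (real d * (real d + 1))})"
  proof -
    have h1: "inner (\<chi> i. 1) u = (\<Sum>i\<in>UNIV. u $ i)" for u :: "real^'n" by (simp add: inner_vec_def)
    show ?thesis unfolding polarQ_def hypH_def h1 by (auto simp: inner_commute)
  qed
  show ?thesis unfolding eq
    by (intro conjI closed_Int closed_INT convex_Int convex_INT closed_hyperplane closed_halfspace_ge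
        convex_hyperplane convex_halfspace_ge ballI)
qed

lemma Q_compact_convex: assumes Qp: "qplex d (Q::(real^'n) set)" shows "compact Q" "convex Q"
proof -
  have eqQ: "polarQ d Q = Q" using Qp by (simp add: qplex_def)
  have "Q \<subseteq> cball centerC (r_out d)"
    using Qp by (auto simp: qplex_def outball_def dist_norm norm_minus_commute)
  hence "bounded Q" using bounded_subset bounded_cball by blast
  thus "compact Q" using polar_closed_convex[of Q] eqQ by (simp add: compact_eq_bounded_closed)
  show "convex Q" using polar_closed_convex[of Q] eqQ by simp
qed

lemma inner_mat: "inner ((W::real^'n^'n) *v u) y = inner u (transpose W *v y)"
  by (metis dot_lmul_matrix vector_transpose_matrix)

lemma main_in:
  assumes Qp: "qplex d (Q::(real^'n) set)"
    and hyp: "\<exists>x0. x0 extreme_point_of Q \<and>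
           {x. x extreme_point_of Q} = {R *v x0 | R. R \<in> pres_group d Q}"
  shows "strongly_maximal d (pres_group d Q)"
proof -
  define G where "G = pres_group d Q"
  have Gc: "G = {M. inG d Q M}" unfolding G_def by (rule pres_char[OF Qp])
  define E where "E = {x. x extreme_point_of Q}"
  have cQ: "compact Q" "convex Q" using Q_compact_convex[OF Qp] by auto
  have KM: "Q = convex hull E" unfolding E_def using Krein_Milman_Minkowski cQ by blast
  have QQ: "polarQ d Q = Q" using Qp by (simp add: qplex_def)
  obtain x0 where x0: "x0 extreme_point_of Q" and EG: "E = {R *v x0 | R. R \<in> G}"
    using hyp unfolding E_def G_def by blast
  define i0 :: 'n where "i0 = undefined"
  define u0 where "u0 = (uvec d i0 :: real^'n)"
  have u0E: "u0 \<in> E" unfolding E_def u0_def using uvec_extreme[OF Qp] by simp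
  then obtain R0 where R0: "inG d Q R0" "u0 = R0 *v x0" using EG Gc by auto
  have x0u: "x0 = transpose R0 *v u0"
    using R0 by (simp only: matrix_vector_mul_assoc inG_def orthogonal_matrix_def) simp
  have Erep: "\<exists>S. inG d Q S \<and> x = transpose S *v u0" if xE: "x \<in> E" for x
  proof -
    obtain R where R: "inG d Q R" "x = R *v x0" using xE EG Gc by auto
    have "x = transpose (R0 ** transpose R) *v u0"
      using R(2) x0u by (simp only: matrix_transpose_mul transpose_transpose matrix_vector_mul_assoc)
    moreover have "inG d Q (R0 ** transpose R)" by (intro inG_mul inG_transpose R0(1) R(1))
    ultimately show ?thesis by blast
  qed
  have germ: "orbital_germ d G = {transpose S *v uvec d i | S i. inG d Q S}"
    unfolding orbital_germ_def Gc
  proof (intro set_eqI iffI)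
    fix x assume "x \<in> {(\<chi> j. (real d * R$i$j + 1) / (real d * (real d + 1))) | R i. R \<in> Collect (inG d Q)}"
    then obtain R i where R: "inG d Q R" "x = (\<chi> j. (real d * R$i$j + 1) / (real d * (real d + 1)))" by blast
    have "x = transpose R *v uvec d i" using R germ_eq[of R i] by (simp add: inG_def)
    thus "x \<in> {transpose S *v uvec d i | S i. inG d Q S}" using R(1) by blast
  next
    fix x assume "x \<in> {transpose S *v uvec d i | S i. inG d Q S}"
    then obtain R i where R: "inG d Q R" "x = transpose R *v uvec d i" by blast
    have "x = (\<chi> j. (real d * R$i$j + 1) / (real d * (real d + 1)))" using R germ_eq[of R i] by (simp add: inG_def)
    thus "x \<in> {(\<chi> j. (real d * R$i$j + 1) / (real d * (real d + 1))) | R i. R \<in> Collect (inG d Q)}" using R(1) by blast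
  qed
  have germQ: "orbital_germ d G \<subseteq> Q"
  proof
    fix x assume "x \<in> orbital_germ d G"
    then obtain S i where S: "inG d Q S" "x = transpose S *v uvec d i" using germ by auto
    have "inG d Q (transpose S)" by (rule inG_transpose[OF S(1)])
    hence "(\<lambda>y. transpose S *v y) ` Q = Q" by (simp add: inG_def)
    thus "x \<in> Q" using S(2) uvec_in_Q[OF Qp, of i] by blast
  qed
  have Egerm: "E \<subseteq> orbital_germ d G"
  proof
    fix x assume "x \<in> E"
    then obtain S where "inG d Q S" "x = transpose S *v u0" using Erep by blast
    thus "x \<in> orbital_germ d G" unfolding germ u0_def by blast
  qed
  have hull: "convex hull (orbital_germ d G) = Q"
  proof
    show "convex hull orbital_germ d G \<subseteq> Q" using germQ cQ(2) by (simp add: hull_minimal)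
    show "Q \<subseteq> convex hull orbital_germ d G" using KM Egerm by (metis hull_mono)
  qed
  have closedQ: "closure Q = Q" using cQ(1) by (simp add: compact_imp_closed)
  have stoch: "stochastic d G"
    unfolding stochastic_def orth_subgroup_def
  proof (intro conjI ballI allI)
    show "mat 1 \<in> G" using Gc inG_id by simp
  next
    fix R assume "R \<in> G"
    hence R: "inG d Q R" using Gc by simp
    show "orthogonal_matrix R" "R *v centerC = centerC" using R by (auto simp: inG_def)
    show "matrix_inv R \<in> G" using R Gc inG_transpose matrix_inv_orth by (auto simp: inG_def)
    fix i j show "R $ i $ j \<ge> - 1 / real d" using inG_entries(2)[OF Qp R] .
  next
    fix R S assume "R \<in> G" "S \<in> G" thus "R ** S \<in> G" using Gc inG_mul by simp
  qed
  have maxi: "G' = G" if st: "stochastic d G'" and sub: "G \<subseteq> G'" for G'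
  proof
    show "G \<subseteq> G'" by (rule sub)
    have o: "\<And>R. R \<in> G' \<Longrightarrow> orthogonal_matrix R" and c: "\<And>R. R \<in> G' \<Longrightarrow> R *v centerC = centerC"
      and en: "\<And>R i j. R \<in> G' \<Longrightarrow> R $ i $ j \<ge> - 1 / real d"
      and mul: "\<And>R S. R \<in> G' \<Longrightarrow> S \<in> G' \<Longrightarrow> R ** S \<in> G'"
      and inv: "\<And>R. R \<in> G' \<Longrightarrow> matrix_inv R \<in> G'"
      using st by (auto simp: stochastic_def orth_subgroup_def)
    have tr: "transpose R \<in> G'" if "R \<in> G'" for R using inv[OF that] matrix_inv_orth[OF o[OF that]] by simp
    have rows: "(\<Sum>k\<in>UNIV. R $ i $ k) = 1" if "R \<in> G'" for R i using rowsum_of_fix[OF c[OF that]] .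
    have WQ: "W *v u0 \<in> Q" if W: "W \<in> G'" for W
    proof -
      have zH: "W *v u0 \<in> hypH" unfolding u0_def by (rule hyp_pres[OF o[OF W] c[OF W] uvec_H])
      have ge: "inner (W *v u0) v \<ge> 1 / (real d * (real d + 1))" if v: "v \<in> E" for v
      proof -
        obtain S where S: "inG d Q S" "v = transpose S *v u0" using Erep[OF v] by blast
        have SG: "S \<in> G'" using S(1) Gc sub by auto
        define Z where "Z = transpose W ** transpose S"
        have ZG: "Z \<in> G'" unfolding Z_def by (intro mul tr W SG)
        have "inner (W *v u0) v = inner u0 (Z *v u0)"
          unfolding S(2) inner_mat Z_def by (simp only: matrix_vector_mul_assoc)
        also have "\<dots> = ((Z *v u0) $ i0 + 1 / real d) / (real d + 1)"
          unfolding u0_def by (rule inner_uvec[OF hyp_pres[OF o[OF ZG] c[OF ZG] uvec_H]])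
        also have "(Z *v u0) $ i0 = (Z $ i0 $ i0 + 1 / real d) / (real d + 1)"
          unfolding u0_def by (rule Mu[OF rows[OF ZG]])
        also have "(Z $ i0 $ i0 + 1 / real d) / (real d + 1) \<ge> 0"
          using en[OF ZG, of i0 i0] dpos by (simp add: divide_simps)
        hence "(((Z $ i0 $ i0 + 1 / real d) / (real d + 1)) + 1 / real d) / (real d + 1) \<ge> (0 + 1 / real d) / (real d + 1)"
          using dpos by (intro divide_right_mono) auto
        finally show ?thesis by simp
      qed
      have "E \<subseteq> {v. inner (W *v u0) v \<ge> 1 / (real d * (real d + 1))}" using ge by blast
      hence "convex hull E \<subseteq> {v. inner (W *v u0) v \<ge> 1 / (real d * (real d + 1))}"
        by (intro hull_minimal convex_halfspace_ge)
      hence "W *v u0 \<in> polarQ d Q" using zH KM by (auto simp: polarQ_def)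
      thus ?thesis using QQ by simp
    qed
    have TQ: "(\<lambda>x. T *v x) ` Q \<subseteq> Q" if T: "T \<in> G'" for T
    proof -
      have "(\<lambda>x. T *v x) ` E \<subseteq> Q"
      proof
        fix y assume "y \<in> (\<lambda>x. T *v x) ` E"
        then obtain x where x: "x \<in> E" "y = T *v x" by blast
        obtain S where S: "inG d Q S" "x = transpose S *v u0" using Erep[OF x(1)] by blast
        have SG: "S \<in> G'" using S(1) Gc sub by auto
        have "y = (T ** transpose S) *v u0" using x(2) S(2) by (simp only: matrix_vector_mul_assoc)
        thus "y \<in> Q" using WQ[OF mul[OF T tr[OF SG]]] by simp
      qed
      hence "convex hull ((\<lambda>x. T *v x) ` E) \<subseteq> Q" using cQ(2) by (simp add: hull_minimal)
      moreover have "(\<lambda>x. T *v x) ` (convex hull E) = convex hull ((\<lambda>x. T *v x) ` E)"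
        by (rule convex_hull_linear_image[OF matrix_vector_mul_linear])
      ultimately show ?thesis using KM by simp
    qed
    show "G' \<subseteq> G"
    proof
      fix T assume T: "T \<in> G'"
      have "Q \<subseteq> (\<lambda>x. T *v x) ` Q"
      proof
        fix x assume x: "x \<in> Q"
        have "transpose T *v x \<in> Q" using TQ[OF tr[OF T]] x by blast
        moreover have "x = T *v (transpose T *v x)" using o[OF T]
          by (simp only: matrix_vector_mul_assoc orthogonal_matrix_def) simp
        ultimately show "x \<in> (\<lambda>x. T *v x) ` Q" by blast
      qed
      hence "(\<lambda>x. T *v x) ` Q = Q" using TQ[OF T] by blast
      thus "T \<in> G" using Gc o[OF T] c[OF T] by (simp add: inG_def)
    qed
  qed
  have "qplex d (closure (convex hull (orbital_germ d G)))" using hull closedQ Qp by simp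
  thus ?thesis using stoch maxi unfolding strongly_maximal_def maximal_stochastic_def G_def by blast
qed
end

theorem mainTheorem16:
  fixes d :: nat and Q :: "(real^'n) set"
  assumes "d \<ge> 2" and "CARD('n) = d^2"
    and "qplex d Q"
    and "\<exists>x0. x0 extreme_point_of Q \<and>
           {x. x extreme_point_of Q} = {R *v x0 | R. R \<in> pres_group d Q}"
  shows "strongly_maximal d (pres_group d Q)"
  using main_in[OF assms(1,2,3,4)] .

end
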